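(* Let $d\in\mathbb N$ and $\varepsilon\in(0,1]$, and let $h=h(d,\varepsilon)$ be the height and $\mathcal P^d_\varepsilon$ the set of leaves of Thiémard's decomposition process (see context). Then $$h=\min\{r\in\mathbb N_0:\ W(Q^{(r)}_{\mathbf 1_r})\le\varepsilon\}$$ (with $Q^{(0)}_{\mathbf 1_0}:=Q^{(0)}_0=I^d$), and $$h\le \lceil d(\varepsilon^{-1}-1)\rceil.$$ Moreover, if $d=2$ then $$|\mathcal P^2_\varepsilon|\le 2\Big(\frac1\varepsilon+\frac12\Big)\frac1\varepsilon,$$ and if $d\ge3$ then $$|\mathcal P^d_\varepsilon|\le \frac{d^d}{d!}\Big(\frac1\varepsilon-\frac12\Big(1-\frac3d\Big)\Big)^d\le \frac{d^d}{d!}\,\varepsilon^{-d}.$$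
   Context: Fix $d\in\mathbb N$ and $\varepsilon\in(0,1]$. For $x,y\in[0,1]^d$ write $[x,y)=\prod_{i=1}^d[x_i,y_i)$ and define the weight $W([x,y))=\prod_{i=1}^d y_i-\prod_{i=1}^d x_i$. Thiémard's decomposition process generates boxes, each with a type in $\{1,\dots,d+1\}$. It starts with $I^d=[0,1)^d=[(0,\dots,0),(1,\dots,1))$, of type $1$. Whenever a generated box $P=[\alpha,\beta)$ has type $j\le d$ and $W(P)>\varepsilon$, it is decomposed (procedure DECOMPOSE$(P,j)$) as follows: put $$\delta^P=\left(\frac{\prod_{i=1}^d\beta_i-\varepsilon}{\prod_{i=1}^{j-1}\alpha_i\prod_{i=j}^d\beta_i}\right)^{1/(d-j+1)},\qquad \gamma^P_i=\alpha_i\ (i<j),\quad \gamma^P_i=\delta^P\beta_i\ (i\ge j).$$ The children of $P$ are the boxes $Q^P_k=[a^{(k)},b^{(k)})$ for $k=j,\dots,d$, where $a^{(k)}_i=\gamma^P_i$ for $i<k$, $a^{(k)}_i=\alpha_i$ for $i\ge k$, $b^{(k)}_k=\gamma^P_k$, $b^{(k)}_i=\beta_i$ for $i\neq k$; the box $Q^P_k$ has type $k$. In addition $P$ has the child $Q^P_{d+1}=[\gamma^P,\beta)$ of type $d+1$. A generated box of type $d+1$ or of weight at most $\varepsilon$ is not decomposed. (Known facts from Thiémard: $\delta^P\in(0,1)$; the process terminates after finitely many steps; $W(Q^P_{d+1})=\varepsilon$ and $W(Q^P_k)=\delta^PW(P)$ for $j\le k\le d$.) $\mathcal P^d_\varepsilon$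 denotes the set of all generated boxes that are not decomposed (the leaves of the process). Indexing: for $r\in\mathbb N$ let $S^r=\{\boldsymbol i\in\mathbb N^r: 1\le i_1\le\dots\le i_r\le d\}$, $S^0=\{0\}$, and $\mathbf 1_r=(1,\dots,1)\in\mathbb N^r$. Put $Q^{(0)}_0=I^d$, $Q^{(1)}_{j_1}=Q^{I^d}_{j_1}$ ($j_1=1,\dots,d$, defined when $W(I^d)>\varepsilon$), and for $\boldsymbol j\in S^r$ with $Q^{(r)}_{\boldsymbol j}$ generated and $W(Q^{(r)}_{\boldsymbol j})>\varepsilon$, $Q^{(r+1)}_{(\boldsymbol j,j_{r+1})}=Q^{Q^{(r)}_{\boldsymbol j}}_{j_{r+1}}$ for $j_{r+1}=j_r,\dots,d$. The height $h=h(d,\varepsilon)$ of the partition is $0$ if $W(I^d)\le\varepsilon$, and otherwise the largest $h\in\mathbb N$ such that there is $\boldsymbol j\in S^{h-1}$ with $Q^{(h-1)}_{\boldsymbol j}$ generated and $W(Q^{(h-1)}_{\boldsymbol j})>\varepsilon$. *)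

theory Defs
  imports Complex_Main
begin

text \<open>Boxes [x,y) in [0,1]^d are represented by pairs of coordinate functions
  (x, y) with coordinates indexed by 1..d.  Coordinates outside 1..d are never
  changed by the process (they stay 0 resp. 1).\<close>

type_synonym box = "(nat \<Rightarrow> real) \<times> (nat \<Rightarrow> real)"

definition weight :: "nat \<Rightarrow> box \<Rightarrow> real" where
  "weight d P = (\<Prod>i\<in>{1..d}. snd P i) - (\<Prod>i\<in>{1..d}. fst P i)"

definition unit_box :: box where
  "unit_box = ((\<lambda>_. 0), (\<lambda>_. 1))"

definition tdelta :: "nat \<Rightarrow> real \<Rightarrow> box \<Rightarrow> nat \<Rightarrow> real" where
  "tdelta d \<epsilon> P j =
     (((\<Prod>i\<in>{1..d}. snd P i) - \<epsilon>) /
       ((\<Prod>i\<in>{1..<j}. fst P i) * (\<Prod>i\<in>{j..d}. snd P i)))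
       powr (1 / real (d - j + 1))"

definition tgamma :: "nat \<Rightarrow> real \<Rightarrow> box \<Rightarrow> nat \<Rightarrow> nat \<Rightarrow> real" where
  "tgamma d \<epsilon> P j i = (if j \<le> i \<and> i \<le> d then tdelta d \<epsilon> P j * snd P i else fst P i)"

definition tchild :: "nat \<Rightarrow> real \<Rightarrow> box \<Rightarrow> nat \<Rightarrow> nat \<Rightarrow> box" where
  "tchild d \<epsilon> P j k =
     (if k = d + 1 then (tgamma d \<epsilon> P j, snd P)
      else ((\<lambda>i. if i < k then tgamma d \<epsilon> P j i else fst P i),
            (\<lambda>i. if i = k then tgamma d \<epsilon> P j i else snd P i)))"

text \<open>Node reached from I^d (type 1) by the sequence of child indices js
  (first index applied first); returns the box and its type.\<close>
definition tnode :: "nat \<Rightarrow> real \<Rightarrow> nat list \<Rightarrow> box \<times> nat" where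
  "tnode d \<epsilon> js = foldl (\<lambda>(P, t) k. (tchild d \<epsilon> P t k, k)) (unit_box, 1) js"

definition tgenerated :: "nat \<Rightarrow> real \<Rightarrow> nat list \<Rightarrow> bool" where
  "tgenerated d \<epsilon> js =
     (\<forall>i < length js.
        snd (tnode d \<epsilon> (take i js)) \<le> d \<and>
        weight d (fst (tnode d \<epsilon> (take i js))) > \<epsilon> \<and>
        snd (tnode d \<epsilon> (take i js)) \<le> js ! i \<and> js ! i \<le> d + 1)"

definition tleaves :: "nat \<Rightarrow> real \<Rightarrow> box set" where
  "tleaves d \<epsilon> = {fst (tnode d \<epsilon> js) | js. tgenerated d \<epsilon> js \<and>
       (snd (tnode d \<epsilon> js) = d + 1 \<or> weight d (fst (tnode d \<epsilon> js)) \<le> \<epsilon>)}"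

text \<open>Q^{(r)}_js with js \<in> S^r generated (entries in 1..d; nondecreasing
  is enforced by tgenerated).\<close>
definition tQgen :: "nat \<Rightarrow> real \<Rightarrow> nat list \<Rightarrow> bool" where
  "tQgen d \<epsilon> js = (tgenerated d \<epsilon> js \<and> (\<forall>k \<in> set js. 1 \<le> k \<and> k \<le> d))"

definition theight :: "nat \<Rightarrow> real \<Rightarrow> nat" where
  "theight d \<epsilon> =
     (if weight d unit_box \<le> \<epsilon> then 0
      else (GREATEST h. 1 \<le> h \<and> (\<exists>js. length js = h - 1 \<and> tQgen d \<epsilon> js \<and>
                                   weight d (fst (tnode d \<epsilon> js)) > \<epsilon>)))"

end

theory Submission imports Defs "HOL-Library.Multiset" "HOL-Analysis.Convex" begin

lemma tnode_Nil[simp]: "tnode d e [] = (unit_box, 1)"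
  by (simp add: tnode_def)

lemma tnode_snoc[simp]: "tnode d e (js @ [k]) = (tchild d e (fst (tnode d e js)) (snd (tnode d e js)) k, k)"
  by (simp add: tnode_def split_beta)

lemma tgenerated_Nil[simp]: "tgenerated d e []"
  by (simp add: tgenerated_def)

lemma tgenerated_snoc:
  "tgenerated d e (js @ [k]) \<longleftrightarrow> tgenerated d e js \<and> snd (tnode d e js) \<le> d \<and>
     weight d (fst (tnode d e js)) > e \<and> snd (tnode d e js) \<le> k \<and> k \<le> d + 1"
proof -
  have A: "\<And>i. i < length js \<Longrightarrow> take i (js @ [k]) = take i js \<and> (js @ [k]) ! i = js ! i"
    by (simp add: nth_append)
  have B: "take (length js) (js @ [k]) = js \<and> (js @ [k]) ! length js = k" by simp
  show ?thesis
    unfolding tgenerated_def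
    apply (rule iffI)
    subgoal using A B by (metis (no_types, lifting) length_append_singleton less_Suc_eq)
    subgoal using A B by (metis (no_types, lifting) length_append_singleton less_Suc_eq)
    done
qed

definition Bv :: "nat \<Rightarrow> box \<Rightarrow> real" where
  "Bv d P = (\<Prod>i\<in>{1..d}. snd P i)"
definition pden :: "nat \<Rightarrow> box \<Rightarrow> nat \<Rightarrow> real" where
  "pden d P j = (\<Prod>i\<in>{1..<j}. fst P i) * (\<Prod>i\<in>{j..d}. snd P i)"

lemma tdelta_eq: "tdelta d e P j = ((Bv d P - e) / pden d P j) powr (1 / real (d - j + 1))"
  by (simp add: tdelta_def Bv_def pden_def)

lemma weight_eq: assumes "1 \<le> d" "fst P d = 0" shows "weight d P = Bv d P"
proof -
  from assms have "(\<Prod>i\<in>{1..d}. fst P i) = 0" by (intro prod_zero) auto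
  then show ?thesis unfolding weight_def Bv_def by (metis diff_zero)
qed

lemma child:
  fixes e :: real
  assumes "1 \<le> j" "j \<le> k" "k \<le> d" "fst P d = 0"
  defines "Q \<equiv> tchild d e P j k" and "\<delta> \<equiv> tdelta d e P j"
  shows "Bv d Q = \<delta> * Bv d P" "pden d Q k = pden d P j * \<delta> ^ (k - j + 1)" "fst Q d = 0"
proof -
  have Qs: "snd Q = (\<lambda>i. if i = k then \<delta> * snd P i else snd P i)"
    using assms by (auto simp: Q_def tchild_def tgamma_def \<delta>_def)
  have Qf: "fst Q = (\<lambda>i. if i < k then tgamma d e P j i else fst P i)"
    using assms by (auto simp: Q_def tchild_def)
  have sQ: "snd Q i = snd P i * (if i = k then \<delta> else 1)" for i
    by (simp add: Qs)
  show "Bv d Q = \<delta> * Bv d P"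
    unfolding Bv_def sQ prod.distrib using assms by (simp add: prod.delta)
  show "fst Q d = 0" unfolding Qf using assms by simp
  have s1: "(\<Prod>i\<in>{1..<k}. fst Q i) = (\<Prod>i\<in>{1..<j}. fst P i) * (\<delta> ^ (k - j) * (\<Prod>i\<in>{j..<k}. snd P i))"
  proof -
    have "(\<Prod>i\<in>{1..<k}. fst Q i) = (\<Prod>i\<in>{1..<j}. fst Q i) * (\<Prod>i\<in>{j..<k}. fst Q i)"
      using assms by (simp add: prod.atLeastLessThan_concat)
    also have "(\<Prod>i\<in>{1..<j}. fst Q i) = (\<Prod>i\<in>{1..<j}. fst P i)"
      unfolding Qf using assms by (intro prod.cong) (auto simp: tgamma_def)
    also have "(\<Prod>i\<in>{j..<k}. fst Q i) = (\<Prod>i\<in>{j..<k}. \<delta> * snd P i)"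
      unfolding Qf using assms by (intro prod.cong) (auto simp: tgamma_def \<delta>_def)
    also have "\<dots> = \<delta> ^ (k - j) * (\<Prod>i\<in>{j..<k}. snd P i)"
      by (simp add: prod.distrib)
    finally show ?thesis .
  qed
  have s2: "(\<Prod>i\<in>{k..d}. snd Q i) = \<delta> * (\<Prod>i\<in>{k..d}. snd P i)"
    unfolding sQ prod.distrib using assms by (simp add: prod.delta)
  have s3: "(\<Prod>i\<in>{j..d}. snd P i) = (\<Prod>i\<in>{j..<k}. snd P i) * (\<Prod>i\<in>{k..d}. snd P i)"
  proof -
    have "{j..d} = {j..<Suc d}" "{k..d} = {k..<Suc d}" by auto
    then show ?thesis using assms by (simp add: prod.atLeastLessThan_concat)
  qed
  show "pden d Q k = pden d P j * \<delta> ^ (k - j + 1)"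
    unfolding pden_def s1 s2 s3 by (simp add: algebra_simps)
qed

lemma rep_snoc: "replicate (Suc n) x = replicate n x @ [x]"
  by (induct n) auto

lemma pden_1: "pden d P 1 = Bv d P"
  by (simp add: pden_def Bv_def)

lemma powr_inv_pow: "0 < (x::real) \<Longrightarrow> 0 < n \<Longrightarrow> (x powr (1 / real n)) ^ n = x"
  by (simp add: powr_power)

lemma ones_node:
  assumes "1 \<le> d"
  shows "snd (tnode d e (replicate r 1)) = 1 \<and> fst (fst (tnode d e (replicate r 1))) d = 0"
proof (induct r)
  case 0 then show ?case by (simp add: unit_box_def)
next
  case (Suc r)
  then show ?case using assms child(3)[of 1 1 d "fst (tnode d e (replicate r 1))" e]
    by (simp add: rep_snoc del: replicate_Suc)
qed

definition bo :: "nat \<Rightarrow> real \<Rightarrow> nat \<Rightarrow> real" where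
  "bo d e r = weight d (fst (tnode d e (replicate r 1)))"
definition rho :: "nat \<Rightarrow> real \<Rightarrow> nat \<Rightarrow> real" where
  "rho d e r = ((bo d e r - e) / bo d e r) powr (1 / real d)"

lemma bo_Bv: "1 \<le> d \<Longrightarrow> bo d e r = Bv d (fst (tnode d e (replicate r 1)))"
  unfolding bo_def using ones_node by (intro weight_eq) auto

lemma bo_0: "1 \<le> d \<Longrightarrow> bo d e 0 = 1"
  by (simp add: bo_Bv Bv_def unit_box_def)

lemma bo_Suc: assumes "1 \<le> d" shows "bo d e (Suc r) = rho d e r * bo d e r"
proof -
  let ?P = "fst (tnode d e (replicate r 1))"
  have n: "snd (tnode d e (replicate r 1)) = 1" "fst ?P d = 0" using ones_node[OF assms] by auto
  have "bo d e (Suc r) = Bv d (tchild d e ?P 1 1)"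
    using assms n by (simp add: bo_Bv rep_snoc del: replicate_Suc)
  also have "\<dots> = tdelta d e ?P 1 * Bv d ?P" using child(1)[of 1 1 d ?P e] n assms by simp
  also have "tdelta d e ?P 1 = rho d e r"
    unfolding tdelta_eq rho_def pden_1 bo_Bv[OF assms] using assms by simp
  finally show ?thesis using bo_Bv[OF assms] by simp
qed

lemma rho_facts:
  assumes "1 \<le> d" "0 < e" "e < bo d e r"
  shows "rho d e r ^ d * bo d e r = bo d e r - e" "0 < rho d e r" "rho d e r \<le> 1"
    "bo d e (Suc r) \<le> bo d e r - e / d"
proof -
  let ?b = "bo d e r" and ?p = "rho d e r"
  have bp: "0 < ?b" using assms by simp
  have x: "0 < (?b - e) / ?b" using assms by simp
  have pd: "?p ^ d = (?b - e) / ?b" unfolding rho_def using x assms by (intro powr_inv_pow) auto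
  then show "?p ^ d * ?b = ?b - e" using bp by simp
  show p0: "0 < ?p" unfolding rho_def using x by (subst powr_gt_zero) auto
  have "?p ^ d \<le> 1 ^ d" using pd bp assms by simp
  then show "?p \<le> 1" using power_le_imp_le_base[of ?p "d - 1" 1] assms by simp
  have "?b \<le> real d * ?b" using assms bp mult_right_mono[of 1 "real d" ?b] by simp
  then have "e \<le> real d * ?b" using assms by linarith
  then have yd: "e / ?b / d \<le> 1" using assms bp by (simp add: field_simps)
  have "1 + real d * (- (e / ?b / d)) \<le> (1 + - (e / ?b / d)) ^ d"
    using yd by (intro Bernoulli_inequality) simp
  moreover have "real d * (e / ?b / d) = e / ?b" using assms by simp
  moreover have "(?b - e) / ?b = 1 - e / ?b" using bp by (simp add: field_simps)
  ultimately have "?p ^ d \<le> (1 - e / ?b / d) ^ d" using pd by simp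
  then have "?p \<le> 1 - e / ?b / d"
    using power_le_imp_le_base[of ?p "d - 1" "1 - e / ?b / d"] assms yd by simp
  then have "?p * ?b \<le> (1 - e / ?b / d) * ?b" using bp by (intro mult_right_mono) auto
  then show "bo d e (Suc r) \<le> ?b - e / d" using bo_Suc[OF assms(1)] bp by (simp add: field_simps)
qed


lemma key:
  fixes B b \<delta> \<rho> \<rho>' p \<epsilon> :: real and m' t d :: nat
  assumes "0 < \<epsilon>" "\<epsilon> < B" "B \<le> b" "0 < \<delta>" "\<delta> \<le> \<rho>" "\<rho> \<le> 1" "0 \<le> \<rho>'" "\<rho>' \<le> \<rho>" "0 < p"
    "\<delta> ^ (m' + t) * p = B - \<epsilon>" "\<rho> ^ d * b = b - \<epsilon>" "\<rho>' ^ d * (\<rho> * b) = \<rho> * b - \<epsilon>"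
    "1 \<le> m'" "m' + t \<le> d"
  shows "\<delta> * B - \<epsilon> \<le> p * \<delta> ^ (t + 1) * \<rho>' ^ m'"
proof -
  obtain n where n: "m' = Suc n" using assms(13) by (cases m') auto
  obtain s where s: "d = m' + s" using assms(14) by (metis le_add1 le_add_diff_inverse le_trans)
  have b0: "0 < b" using assms by linarith
  have r0: "0 < \<rho>" using assms by linarith
  have A: "(\<delta> * B - \<epsilon>) * \<delta> ^ n \<le> (B - \<epsilon>) * \<rho>' ^ m'"
  proof (cases "\<delta> * B \<le> \<epsilon>")
    case True
    then have "(\<delta> * B - \<epsilon>) * \<delta> ^ n \<le> 0" using assms by (simp add: mult_nonpos_nonneg)
    moreover have "0 \<le> (B - \<epsilon>) * \<rho>' ^ m'" using assms by simp
    ultimately show ?thesis by linarith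
  next
    case False
    have e1: "(\<delta>*b-\<epsilon>)*(B-\<epsilon>) - (\<delta>*B-\<epsilon>)*(b-\<epsilon>) = \<epsilon>*(b-B)*(1-\<delta>)" by algebra
    have "0 \<le> \<epsilon>*(b-B)*(1-\<delta>)" using assms by simp
    then have h1: "(\<delta>*B-\<epsilon>)*(b-\<epsilon>) \<le> (\<delta>*b-\<epsilon>)*(B-\<epsilon>)" using e1 by linarith
    have "\<delta>*b \<le> \<rho>*b" using assms b0 by (intro mult_right_mono) auto
    then have h2: "(\<delta>*b-\<epsilon>)*(B-\<epsilon>) \<le> (\<rho>*b-\<epsilon>)*(B-\<epsilon>)" using assms by (intro mult_right_mono) auto
    have h3: "\<delta> ^ n \<le> \<rho> ^ n" using assms by (intro power_mono) auto
    have h12: "(\<delta>*B-\<epsilon>)*(b-\<epsilon>) \<le> (\<rho>*b-\<epsilon>)*(B-\<epsilon>)" using h1 h2 by linarith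
    have "\<delta>*B \<le> \<delta>*b" using assms by (intro mult_left_mono) auto
    then have "0 \<le> \<rho>*b-\<epsilon>" using \<open>\<delta>*b \<le> \<rho>*b\<close> False by linarith
    then have nn: "0 \<le> (\<rho>*b-\<epsilon>)*(B-\<epsilon>)" using assms by simp
    have "(\<delta>*B-\<epsilon>)*(b-\<epsilon>) * \<delta> ^ n \<le> ((\<rho>*b-\<epsilon>)*(B-\<epsilon>)) * \<rho> ^ n"
      by (rule mult_mono[OF h12 h3 nn]) (use assms in simp)
    also have "(\<rho>*b-\<epsilon>)*(B-\<epsilon>) * \<rho> ^ n = (\<rho>' ^ d * \<rho> ^ m') * (b * (B - \<epsilon>))"
    proof -
      have eq: "\<rho>*b-\<epsilon> = \<rho>'^d*(\<rho>*b)" using assms(12) by simp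
      show ?thesis by (subst eq) (simp add: n algebra_simps)
    qed
    also have "\<rho>' ^ d * \<rho> ^ m' \<le> \<rho>' ^ m' * \<rho> ^ d"
    proof -
      have "\<rho>' ^ s \<le> \<rho> ^ s" using assms by (intro power_mono) auto
      then have "\<rho>' ^ m' * \<rho> ^ m' * \<rho>' ^ s \<le> \<rho>' ^ m' * \<rho> ^ m' * \<rho> ^ s"
        using assms r0 by (intro mult_left_mono) auto
      then show ?thesis unfolding s by (simp add: power_add algebra_simps)
    qed
    then have "(\<rho>' ^ d * \<rho> ^ m') * (b * (B - \<epsilon>)) \<le> (\<rho>' ^ m' * \<rho> ^ d) * (b * (B - \<epsilon>))"
      using assms b0 by (intro mult_right_mono) auto
    finally have F: "(\<delta>*B-\<epsilon>)*(b-\<epsilon>) * \<delta> ^ n \<le> (\<rho>' ^ m' * \<rho> ^ d) * (b * (B - \<epsilon>))" .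
    have eq2: "b-\<epsilon> = \<rho>^d*b" using assms(11) by simp
    have "((\<delta>*B-\<epsilon>) * \<delta> ^ n) * (\<rho> ^ d * b) \<le> ((B - \<epsilon>) * \<rho>' ^ m') * (\<rho> ^ d * b)"
      using F unfolding eq2 by (simp add: algebra_simps)
    then show ?thesis using r0 b0 by (simp add: mult_le_cancel_right)
  qed
  have "(p * \<delta> ^ (t + 1) * \<rho>' ^ m') * \<delta> ^ n = (B - \<epsilon>) * \<rho>' ^ m'"
  proof -
    have eq3: "B - \<epsilon> = \<delta> ^ (m' + t) * p" using assms(10) by simp
    show ?thesis unfolding eq3 by (simp add: n algebra_simps power_add)
  qed
  with A have "(\<delta> * B - \<epsilon>) * \<delta> ^ n \<le> (p * \<delta> ^ (t + 1) * \<rho>' ^ m') * \<delta> ^ n" by linarith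
  then show ?thesis using assms(4) by (simp add: mult_le_cancel_right)
qed


lemma tQgen_snoc: "tQgen d e (js @ [k]) \<longleftrightarrow> tQgen d e js \<and> snd (tnode d e js) \<le> d \<and>
     weight d (fst (tnode d e js)) > e \<and> snd (tnode d e js) \<le> k \<and> 1 \<le> k \<and> k \<le> d"
  unfolding tQgen_def tgenerated_snoc by auto

lemma rho_mono:
  assumes "1 \<le> d" "0 < e" "e < bo d e (Suc r)" "e < bo d e r"
  shows "rho d e (Suc r) \<le> rho d e r"
proof -
  have s: "bo d e (Suc r) \<le> bo d e r - e / d" "e / d \<ge> 0" using assms rho_facts(4)[of d e r] by auto
  then have br: "e < bo d e r" "bo d e (Suc r) \<le> bo d e r" using assms by linarith+
  have f1: "rho d e r ^ d * bo d e r = bo d e r - e" "0 < rho d e r" using rho_facts[OF assms(1,2) br(1)] by auto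
  have f2: "rho d e (Suc r) ^ d * bo d e (Suc r) = bo d e (Suc r) - e" "0 < rho d e (Suc r)"
    using rho_facts[OF assms(1,2,3)] by auto
  have "rho d e (Suc r) ^ d = 1 - e / bo d e (Suc r)" using f2 assms by (simp add: field_simps)
  also have "\<dots> \<le> 1 - e / bo d e r" using assms br by (simp add: frac_le)
  also have "\<dots> = rho d e r ^ d" using f1 assms br by (simp add: field_simps)
  finally show ?thesis using power_le_imp_le_base[of "rho d e (Suc r)" "d - 1" "rho d e r"] f1 assms by simp
qed

lemma inv:
  assumes "1 \<le> d" "0 < e" "tQgen d e js"
  shows "1 \<le> snd (tnode d e js) \<and> snd (tnode d e js) \<le> d \<and> fst (fst (tnode d e js)) d = 0 \<and>
    0 < pden d (fst (tnode d e js)) (snd (tnode d e js)) \<and> Bv d (fst (tnode d e js)) \<le> bo d e (length js) \<and>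
    (e < bo d e (length js) \<longrightarrow> Bv d (fst (tnode d e js)) - e \<le>
        pden d (fst (tnode d e js)) (snd (tnode d e js)) * rho d e (length js) ^ (d - snd (tnode d e js) + 1))"
  using assms(3)
proof (induct js rule: rev_induct)
  case Nil
  have b0: "bo d e 0 = 1" using bo_0 assms by simp
  have "Bv d unit_box = 1" by (simp add: Bv_def unit_box_def)
  moreover have "pden d unit_box 1 = 1" by (simp add: pden_def unit_box_def)
  moreover have "e < 1 \<Longrightarrow> 1 - e \<le> rho d e 0 ^ d"
    using rho_facts(1)[of d e 0] assms b0 by simp
  ultimately show ?case using assms b0 by (simp add: unit_box_def)
next
  case (snoc k js)
  let ?P = "fst (tnode d e js)" and ?j = "snd (tnode d e js)" and ?r = "length js"
  have S: "tQgen d e js" "?j \<le> d" "e < weight d ?P" "?j \<le> k" "1 \<le> k" "k \<le> d"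
    using snoc(2) unfolding tQgen_snoc by auto
  have IH: "1 \<le> ?j" "fst ?P d = 0" "0 < pden d ?P ?j" "Bv d ?P \<le> bo d e ?r"
     "e < bo d e ?r \<longrightarrow> Bv d ?P - e \<le> pden d ?P ?j * rho d e ?r ^ (d - ?j + 1)"
    using snoc(1)[OF S(1)] by auto
  define B where "B = Bv d ?P"
  define p where "p = pden d ?P ?j"
  define b where "b = bo d e ?r"
  define \<rho> where "\<rho> = rho d e ?r"
  define m where "m = d - ?j + 1"
  define \<delta> where "\<delta> = tdelta d e ?P ?j"
  have Be: "e < B" using S(3) weight_eq[OF assms(1) IH(2)] B_def by simp
  have bB: "B \<le> b" using IH B_def b_def by simp
  have eb: "e < b" using Be bB by linarith
  have p0: "0 < p" using IH p_def by simp
  have I2: "B - e \<le> p * \<rho> ^ m" using IH(5) eb unfolding B_def b_def p_def \<rho>_def m_def by simp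
  have m0: "0 < m" unfolding m_def by simp
  have x0: "0 < (B - e) / p" using Be p0 by simp
  have dl: "\<delta> = ((B - e) / p) powr (1 / real m)"
    unfolding \<delta>_def tdelta_eq B_def p_def m_def by simp
  have d0: "0 < \<delta>" unfolding dl using x0 by (subst powr_gt_zero) auto
  have dm: "\<delta> ^ m = (B - e) / p" unfolding dl using x0 m0 by (intro powr_inv_pow) auto
  then have dmp: "\<delta> ^ m * p = B - e" using p0 by simp
  have rf: "\<rho> ^ d * b = b - e" "0 < \<rho>" "\<rho> \<le> 1" using rho_facts[OF assms(1,2), of ?r] eb
    unfolding \<rho>_def b_def by auto
  have "\<delta> ^ m \<le> \<rho> ^ m" unfolding dm using I2 p0 by (simp add: divide_le_eq mult.commute)
  then have dr: "\<delta> \<le> \<rho>" using power_le_imp_le_base[of \<delta> "m - 1" \<rho>] m0 rf by simp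
  have C: "Bv d (tchild d e ?P ?j k) = \<delta> * B" "pden d (tchild d e ?P ?j k) k = p * \<delta> ^ (k - ?j + 1)"
     "fst (tchild d e ?P ?j k) d = 0"
    using child[OF IH(1) S(4) S(6) IH(2), of e] unfolding \<delta>_def B_def p_def by auto
  have bS: "bo d e (Suc ?r) = \<rho> * b" using bo_Suc[OF assms(1)] unfolding \<rho>_def b_def by simp
  have new1: "\<delta> * B \<le> \<rho> * b" using dr bB d0 Be assms(2) by (intro mult_mono) auto
  have new2: "\<delta> * B - e \<le> p * \<delta> ^ (k - ?j + 1) * rho d e (Suc ?r) ^ (d - k + 1)"
    if eS: "e < bo d e (Suc ?r)"
  proof -
    have r'f: "rho d e (Suc ?r) ^ d * (\<rho> * b) = \<rho> * b - e" "0 < rho d e (Suc ?r)"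
      using rho_facts[OF assms(1,2) eS] bS by auto
    have r'r: "rho d e (Suc ?r) \<le> \<rho>" using rho_mono[OF assms(1,2) eS eb[unfolded b_def]] \<rho>_def by simp
    have mm: "(d - k + 1) + (k - ?j) = m" unfolding m_def using S by simp
    have md: "(d - k + 1) + (k - ?j) \<le> d" using mm IH(1) assms(1) unfolding m_def by arith
    have dmp': "\<delta> ^ ((d - k + 1) + (k - ?j)) * p = B - e" using dmp mm by simp
    have "0 \<le> rho d e (Suc ?r)" using r'f by simp
    from key[OF assms(2) Be bB d0 dr rf(3) this r'r p0 dmp' rf(1) r'f(1) _ md]
    show ?thesis by simp
  qed
  show ?case using C new1 new2 bS S p0 d0 unfolding B_def by simp
qed


lemma tQgen_ones: assumes "1 \<le> d" shows "tQgen d e (replicate r 1) \<longleftrightarrow> (\<forall>i<r. e < bo d e i)"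
proof (induct r)
  case 0 then show ?case by (simp add: tQgen_def)
next
  case (Suc r)
  have "tQgen d e (replicate (Suc r) 1) \<longleftrightarrow> tQgen d e (replicate r 1) \<and> e < bo d e r"
    unfolding rep_snoc tQgen_snoc using ones_node[OF assms, of e r] assms by (simp add: bo_def)
  then show ?case using Suc by (auto simp: less_Suc_eq)
qed

lemma ones_bound: assumes "1 \<le> d" "0 < e" shows "(\<forall>i<r. e < bo d e i) \<Longrightarrow> bo d e r \<le> 1 - real r * e / d"
proof (induct r)
  case 0 then show ?case using bo_0[OF assms(1)] by simp
next
  case (Suc r)
  then have "bo d e r \<le> 1 - real r * e / d" "e < bo d e r" by auto
  moreover have "bo d e (Suc r) \<le> bo d e r - e / d" using rho_facts(4)[OF assms] calculation by simp
  moreover have "real (Suc r) * e / d = real r * e / d + e / d" by (simp add: add_divide_distrib algebra_simps)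
  ultimately show ?case by linarith
qed

lemma tgen_take: "tgenerated d e js \<Longrightarrow> i \<le> length js \<Longrightarrow> tgenerated d e (take i js)"
  unfolding tgenerated_def by (auto simp: min_def)

lemma tQgen_take: "tQgen d e js \<Longrightarrow> i \<le> length js \<Longrightarrow> tQgen d e (take i js)"
  unfolding tQgen_def using tgen_take by (auto dest: in_set_takeD)

lemma tgen_prefix: "tgenerated d e (js @ z # zs) \<Longrightarrow> snd (tnode d e js) \<le> d \<and> e < weight d (fst (tnode d e js))"
  unfolding tgenerated_def by (drule spec[of _ "length js"]) simp

lemma dominate:
  assumes "1 \<le> d" "0 < e" "tQgen d e js" "e < weight d (fst (tnode d e js))"
  shows "\<forall>i \<le> length js. e < bo d e i"
proof (intro allI impI)
  fix i assume i: "i \<le> length js"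
  have q: "tQgen d e (take i js)" using tQgen_take[OF assms(3) i] .
  have "e < weight d (fst (tnode d e (take i js)))"
  proof (cases "i = length js")
    case True then show ?thesis using assms by simp
  next
    case False
    then have "js = take i js @ js ! i # drop (Suc i) js" using i by (simp add: id_take_nth_drop)
    then show ?thesis using tgen_prefix[of d e "take i js"] assms(3) unfolding tQgen_def by metis
  qed
  moreover have "weight d (fst (tnode d e (take i js))) = Bv d (fst (tnode d e (take i js)))"
    using inv[OF assms(1,2) q] assms(1) weight_eq by auto
  ultimately show "e < bo d e i" using inv[OF assms(1,2) q] i by (simp add: min_def split: if_splits)
qed


definition Rh :: "nat \<Rightarrow> real \<Rightarrow> nat" where "Rh d e = (LEAST r. bo d e r \<le> e)"

lemma Rh_facts:
  assumes "1 \<le> d" "0 < e" "e \<le> 1"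
  shows "bo d e (Rh d e) \<le> e" "\<forall>i < Rh d e. e < bo d e i" "Rh d e \<le> nat \<lceil>real d * (1 / e - 1)\<rceil>"
proof -
  let ?N = "nat \<lceil>real d * (1 / e - 1)\<rceil>"
  have c0: "0 \<le> real d * (1 / e - 1)" using assms by simp
  have ex: "\<exists>r \<le> ?N. bo d e r \<le> e"
  proof (cases "\<forall>i < ?N. e < bo d e i")
    case True
    then have A: "bo d e ?N \<le> 1 - real ?N * e / d" using ones_bound[OF assms(1,2)] by blast
    have "real ?N \<ge> real d * (1 / e - 1)" using c0 ceiling_correct[of "real d * (1 / e - 1)"] by linarith
    then have "real ?N * (e / d) \<ge> real d * (1 / e - 1) * (e / d)" using assms by (intro mult_right_mono) auto
    moreover have "real d * (1 / e - 1) * (e / d) = 1 - e" using assms by (simp add: field_simps)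
    ultimately have "1 - real ?N * e / d \<le> e" by simp
    with A show ?thesis by auto
  next
    case False then show ?thesis by (meson less_imp_le not_less)
  qed
  then obtain r0 where r0: "r0 \<le> ?N" "bo d e r0 \<le> e" by blast
  show "bo d e (Rh d e) \<le> e" unfolding Rh_def using r0(2) by (rule LeastI)
  show "\<forall>i < Rh d e. e < bo d e i" unfolding Rh_def using not_less_Least by (metis not_less)
  have "Rh d e \<le> r0" unfolding Rh_def using r0 by (intro Least_le) auto
  then show "Rh d e \<le> ?N" using r0 by simp
qed

lemma len_lt_Rh:
  assumes "1 \<le> d" "0 < e" "e \<le> 1" "tQgen d e js" "e < weight d (fst (tnode d e js))"
  shows "length js < Rh d e"
proof (rule ccontr)
  assume "\<not> length js < Rh d e"
  then have "e < bo d e (Rh d e)" using dominate[OF assms(1,2,4,5)] by simp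
  then show False using Rh_facts(1)[OF assms(1-3)] by simp
qed

lemma theight_Rh:
  assumes "1 \<le> d" "0 < e" "e \<le> 1"
  shows "theight d e = Rh d e"
proof (cases "weight d unit_box \<le> e")
  case True
  then have "bo d e 0 \<le> e" by (simp add: bo_def)
  then have "Rh d e = 0" unfolding Rh_def by simp
  then show ?thesis using True by (simp add: theight_def)
next
  case False
  have b0: "e < bo d e 0" using False by (simp add: bo_def)
  then have R1: "1 \<le> Rh d e" using Rh_facts(1)[OF assms] by (cases "Rh d e") auto
  have Q: "1 \<le> Rh d e \<and> (\<exists>js. length js = Rh d e - 1 \<and> tQgen d e js \<and> weight d (fst (tnode d e js)) > e)"
  proof -
    have "tQgen d e (replicate (Rh d e - 1) 1)" using tQgen_ones[OF assms(1)] Rh_facts(2)[OF assms] by simp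
    moreover have "e < weight d (fst (tnode d e (replicate (Rh d e - 1) 1)))"
      using Rh_facts(2)[OF assms] R1 unfolding bo_def[symmetric] by simp
    ultimately show ?thesis using R1 by (intro conjI exI[of _ "replicate (Rh d e - 1) 1"]) auto
  qed
  have "(GREATEST h. 1 \<le> h \<and> (\<exists>js. length js = h - 1 \<and> tQgen d e js \<and> weight d (fst (tnode d e js)) > e)) = Rh d e"
  proof (rule Greatest_equality)
    show "1 \<le> Rh d e \<and> (\<exists>js. length js = Rh d e - 1 \<and> tQgen d e js \<and> weight d (fst (tnode d e js)) > e)" by (rule Q)
  next
    fix y assume "1 \<le> y \<and> (\<exists>js. length js = y - 1 \<and> tQgen d e js \<and> weight d (fst (tnode d e js)) > e)"
    then obtain js where "1 \<le> y" "length js = y - 1" "tQgen d e js" "weight d (fst (tnode d e js)) > e" by blast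
    then show "y \<le> Rh d e" using len_lt_Rh[OF assms, of js] by simp
  qed
  then show ?thesis using False by (simp add: theight_def)
qed

lemma least_Rh:
  assumes "1 \<le> d" "0 < e" "e \<le> 1"
  shows "(LEAST r. tQgen d e (replicate r 1) \<and> weight d (fst (tnode d e (replicate r 1))) \<le> e) = Rh d e"
proof (rule Least_equality)
  show "tQgen d e (replicate (Rh d e) 1) \<and> weight d (fst (tnode d e (replicate (Rh d e) 1))) \<le> e"
    using tQgen_ones[OF assms(1)] Rh_facts[OF assms] unfolding bo_def by simp
next
  fix y assume "tQgen d e (replicate y 1) \<and> weight d (fst (tnode d e (replicate y 1))) \<le> e"
  then have "bo d e y \<le> e" by (simp add: bo_def)
  then show "Rh d e \<le> y" unfolding Rh_def by (rule Least_le)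
qed


lemma gen_props:
  "tgenerated d e js \<Longrightarrow> sorted js \<and> (\<forall>x\<in>set js. 1 \<le> x \<and> x \<le> snd (tnode d e js)) \<and>
     1 \<le> snd (tnode d e js) \<and> (\<forall>x\<in>set js. x \<le> d + 1)"
proof (induct js rule: rev_induct)
  case Nil then show ?case by simp
next
  case (snoc k js)
  then have S: "tgenerated d e js" "snd (tnode d e js) \<le> k" "k \<le> d + 1" unfolding tgenerated_snoc by auto
  from snoc(1)[OF S(1)] S(2,3) show ?case by (auto simp: sorted_append)
qed

definition Lv :: "nat \<Rightarrow> real \<Rightarrow> nat list set" where
  "Lv d e = {js. tgenerated d e js \<and> (snd (tnode d e js) = d + 1 \<or> weight d (fst (tnode d e js)) \<le> e)}"

lemma tleaves_img: "tleaves d e = (\<lambda>js. fst (tnode d e js)) ` Lv d e"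
  unfolding tleaves_def Lv_def by blast

lemma Lv_len:
  assumes "1 \<le> d" "0 < e" "e \<le> 1" "js \<in> Lv d e"
  shows "length js \<le> Rh d e"
proof (cases js rule: rev_cases)
  case Nil then show ?thesis by simp
next
  case (snoc ys k)
  have g: "tgenerated d e (ys @ [k])" using assms(4) snoc by (simp add: Lv_def)
  then have S: "tgenerated d e ys" "snd (tnode d e ys) \<le> d" "e < weight d (fst (tnode d e ys))"
    unfolding tgenerated_snoc by auto
  have "tQgen d e ys" using gen_props[OF S(1)] S(2) unfolding tQgen_def using S(1) by auto
  then have "length ys < Rh d e" using len_lt_Rh[OF assms(1-3)] S(3) by blast
  then show ?thesis using snoc by simp
qed

definition pad :: "nat \<Rightarrow> nat \<Rightarrow> nat list \<Rightarrow> nat list" where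
  "pad d R js = js @ replicate (R - length js) (d + 1)"

lemma pad_sorted: "tgenerated d e js \<Longrightarrow> sorted (pad d R js)"
  using gen_props[of d e js] unfolding pad_def by (auto simp: sorted_append)

lemma pad_inj:
  assumes "js \<in> Lv d e" "js' \<in> Lv d e" "pad d R js = pad d R js'" "length js \<le> length js'"
  shows "js = js'"
proof -
  have t: "take (length js) js' = js"
    using arg_cong[OF assms(3), of "take (length js)"] assms(4) unfolding pad_def by simp
  show ?thesis
  proof (cases "length js = length js'")
    case True then show ?thesis using t by simp
  next
    case False
    then have "length js < length js'" using assms(4) by simp
    then have "js' = js @ js' ! length js # drop (Suc (length js)) js'"
      using t by (metis id_take_nth_drop)
    then have "snd (tnode d e js) \<le> d \<and> e < weight d (fst (tnode d e js))"
      using assms(2) tgen_prefix[of d e js] unfolding Lv_def by (metis (no_types, lifting) mem_Collect_eq)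
    then show ?thesis using assms(1) unfolding Lv_def by auto
  qed
qed


lemma count_leaves:
  assumes "1 \<le> d" "0 < e" "e \<le> 1"
  shows "finite (tleaves d e) \<and> card (tleaves d e) \<le> (d + Rh d e) choose Rh d e"
proof -
  let ?R = "Rh d e"
  let ?f = "\<lambda>js. mset (pad d ?R js)"
  let ?M = "multisets_of_size {1..d+1} ?R"
  have sub: "?f ` Lv d e \<subseteq> ?M"
  proof
    fix X assume "X \<in> ?f ` Lv d e"
    then obtain js where js: "js \<in> Lv d e" "X = ?f js" by blast
    have g: "tgenerated d e js" using js(1) by (simp add: Lv_def)
    have "length js \<le> ?R" using Lv_len[OF assms js(1)] .
    moreover have "set (pad d ?R js) \<subseteq> {1..d+1}" using gen_props[OF g] unfolding pad_def by auto
    ultimately show "X \<in> ?M" using js(2) unfolding multisets_of_size_def pad_def by auto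
  qed
  have inj: "inj_on ?f (Lv d e)"
  proof (rule inj_onI)
    fix x y assume xy: "x \<in> Lv d e" "y \<in> Lv d e" "?f x = ?f y"
    have sx: "sorted (pad d ?R x)" "sorted (pad d ?R y)" using xy pad_sorted unfolding Lv_def by auto
    have "pad d ?R x = pad d ?R y"
      by (metis sx xy(3) sorted_list_of_multiset_mset sorted_sort_id)
    then show "x = y" using pad_inj xy by (metis nat_le_linear)
  qed
  have fin: "finite ?M" by (rule finite_multisets_of_size) simp
  have cM: "card ?M = (d + ?R) choose ?R" using card_multisets_of_size[of "{1..d+1}" ?R] by simp
  have fL: "finite (Lv d e)" using inj sub fin by (metis finite_imageD finite_subset)
  have "card (Lv d e) \<le> card ?M" using inj sub fin by (intro card_inj_on_le) auto
  moreover have "card (tleaves d e) \<le> card (Lv d e)" unfolding tleaves_img using fL by (rule card_image_le)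
  ultimately show ?thesis using fL cM unfolding tleaves_img by simp
qed


lemma binom_prod: "real ((R + d) choose d) * fact d = (\<Prod>i\<in>{1..d}. real R + real i)"
proof (induct d)
  case 0 then show ?case by simp
next
  case (Suc d)
  have "real ((R + Suc d) choose Suc d) * fact (Suc d) = real ((Suc (R + d) choose Suc d) * Suc d) * fact d"
    by (simp add: algebra_simps)
  also have "(Suc (R + d) choose Suc d) * Suc d = Suc (R + d) * ((R + d) choose d)"
    by (rule Suc_times_binomial_eq[symmetric])
  also have "real (Suc (R + d) * ((R + d) choose d)) * fact d = (real R + real (Suc d)) * (real ((R + d) choose d) * fact d)"
    by (simp add: algebra_simps)
  also have "\<dots> = (\<Prod>i\<in>{1..Suc d}. real R + real i)" using Suc by (simp add: prod.cl_ivl_Suc)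
  finally show ?case .
qed

lemma sum_id_real: "(\<Sum>i\<in>{1..d}. real i) = real d * (real d + 1) / 2"
  by (induct d) (auto simp: sum.cl_ivl_Suc field_simps)

lemma final_d2:
  fixes R :: nat and x :: real
  assumes "real R \<le> of_int \<lceil>2 * (x - 1)\<rceil>" "1 \<le> x" "real c \<le> real ((2 + R) choose R)"
  shows "real c \<le> 2 * (x + 1 / 2) * x"
proof -
  define C where "C = real_of_int \<lceil>2 * (x - 1)\<rceil>"
  have "C - 1 < 2 * (x - 1)" unfolding C_def using ceiling_correct[of "2 * (x - 1)"] by blast
  then have R: "real R < 2 * x - 1" using assms(1) unfolding C_def[symmetric] by (simp add: algebra_simps)
  have "real ((2 + R) choose R) = real ((R + 2) choose 2)"
    by (metis add.commute binomial_symmetric add_diff_cancel_left' le_add1)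
  also have "\<dots> = (\<Prod>i\<in>{1..2}. real R + real i) / 2" using binom_prod[of R 2] by (simp add: field_simps)
  also have "\<dots> = (real R + 1) * (real R + 2) / 2" by (simp add: numeral_2_eq_2)
  also have "\<dots> \<le> (2 * x) * (2 * x + 1) / 2" using R by (intro divide_right_mono mult_mono) auto
  also have "\<dots> = 2 * (x + 1 / 2) * x" by (simp add: field_simps)
  finally show ?thesis using assms(3) by linarith
qed

lemma final_d3:
  fixes R d :: nat and x :: real
  assumes "real R \<le> of_int \<lceil>real d * (x - 1)\<rceil>" "1 \<le> x" "3 \<le> d" "real c \<le> real ((d + R) choose R)"
  shows "real c \<le> real d ^ d / fact d * (x - 1 / 2 * (1 - 3 / real d)) ^ d \<and>
     real d ^ d / fact d * (x - 1 / 2 * (1 - 3 / real d)) ^ d \<le> real d ^ d / fact d * x ^ d"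
proof -
  let ?y = "x - 1 / 2 * (1 - 3 / real d)"
  have d0: "0 < real d" using assms by simp
  define C where "C = real_of_int \<lceil>real d * (x - 1)\<rceil>"
  have "C - 1 < real d * (x - 1)" unfolding C_def using ceiling_correct[of "real d * (x - 1)"] by blast
  then have "C < real d * (x - 1) + 1" by simp
  then have R: "real R < real d * (x - 1) + 1" using assms(1) unfolding C_def[symmetric] by simp
  have c1: "real ((d + R) choose R) = real ((R + d) choose d)"
    by (metis add.commute binomial_symmetric add_diff_cancel_left' le_add1)
  let ?P = "\<Prod>i\<in>{1..d}. real R + real i"
  have P0: "0 < ?P" by (intro prod_pos) auto
  have am: "(\<Sum>i\<in>{1..d}. (real R + real i) / card {1..d}) \<ge> ?P powr (1 / card {1..d})"
    using assms(3) by (intro arith_geom_mean) auto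
  have s1: "(\<Sum>i\<in>{1..d}. (real R + real i) / card {1..d}) = (\<Sum>i\<in>{1..d}. real R + real i) / real d"
    by (simp add: sum_divide_distrib)
  have s2: "(\<Sum>i\<in>{1..d}. real R + real i) = real d * real R + (\<Sum>i\<in>{1..d}. real i)"
    by (simp add: sum.distrib)
  have "(\<Sum>i\<in>{1..d}. (real R + real i) / card {1..d}) = (real d * real R + real d * (real d + 1) / 2) / real d"
    unfolding s1 s2 sum_id_real ..
  also have "\<dots> = real R + (real d + 1) / 2" using d0 by (simp add: field_simps)
  also have "\<dots> \<le> real d * ?y"
  proof -
    have "real d * ?y = real d * x - real d / 2 + 3 / 2" using d0 by (simp add: field_simps)
    moreover have "real d * (x - 1) = real d * x - real d" by (simp add: algebra_simps)
    ultimately show ?thesis using R by (simp add: field_simps)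
  qed
  finally have m: "?P powr (1 / real d) \<le> real d * ?y" using am by simp
  have "?P = (?P powr (1 / real d)) ^ d" using P0 d0 by (simp add: powr_inv_pow)
  also have "\<dots> \<le> (real d * ?y) ^ d" using m by (intro power_mono) auto
  finally have Pb: "?P \<le> real d ^ d * ?y ^ d" by (simp add: power_mult_distrib)
  have "real ((d + R) choose R) = ?P / fact d" using binom_prod[of R d] c1 by (simp add: field_simps)
  also have "\<dots> \<le> real d ^ d * ?y ^ d / fact d" using Pb by (intro divide_right_mono) auto
  finally have A: "real c \<le> real d ^ d / fact d * ?y ^ d" using assms(4) by simp
  have t1: "3 / real d \<le> 1" using assms(3) by simp
  define A where "A = 1 / 2 * (1 - 3 / real d)"
  have A1: "A \<le> 1 / 2" "0 \<le> A" unfolding A_def using t1 by auto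
  have y0: "0 \<le> ?y" unfolding A_def[symmetric] using A1 assms(2) by linarith
  have yx: "?y \<le> x" unfolding A_def[symmetric] using A1 by linarith
  have "?y ^ d \<le> x ^ d" using y0 yx by (intro power_mono) auto
  then have "real d ^ d / fact d * ?y ^ d \<le> real d ^ d / fact d * x ^ d" by (intro mult_left_mono) auto
  with A show ?thesis by simp
qed


theorem mainTheorem3:
  fixes d :: nat and \<epsilon> :: real
  assumes "1 \<le> d" and "0 < \<epsilon>" and "\<epsilon> \<le> 1"
  shows "theight d \<epsilon> =
           (LEAST r. tQgen d \<epsilon> (replicate r 1) \<and>
                     weight d (fst (tnode d \<epsilon> (replicate r 1))) \<le> \<epsilon>)
       \<and> real (theight d \<epsilon>) \<le> of_int \<lceil>real d * (1 / \<epsilon> - 1)\<rceil>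
       \<and> finite (tleaves d \<epsilon>)
       \<and> (d = 2 \<longrightarrow> real (card (tleaves d \<epsilon>)) \<le> 2 * (1 / \<epsilon> + 1 / 2) * (1 / \<epsilon>))
       \<and> (3 \<le> d \<longrightarrow> real (card (tleaves d \<epsilon>))
              \<le> real d ^ d / fact d * (1 / \<epsilon> - 1 / 2 * (1 - 3 / real d)) ^ d
            \<and> real d ^ d / fact d * (1 / \<epsilon> - 1 / 2 * (1 - 3 / real d)) ^ d
              \<le> real d ^ d / fact d * (1 / \<epsilon>) ^ d)"
proof -
  let ?R = "Rh d \<epsilon>"
  have h: "theight d \<epsilon> = ?R" by (rule theight_Rh[OF assms])
  have l: "(LEAST r. tQgen d \<epsilon> (replicate r 1) \<and> weight d (fst (tnode d \<epsilon> (replicate r 1))) \<le> \<epsilon>) = ?R"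
    by (rule least_Rh[OF assms])
  have c0: "0 \<le> real d * (1 / \<epsilon> - 1)" using assms by simp
  have "?R \<le> nat \<lceil>real d * (1 / \<epsilon> - 1)\<rceil>" by (rule Rh_facts(3)[OF assms])
  then have hb: "real ?R \<le> of_int \<lceil>real d * (1 / \<epsilon> - 1)\<rceil>" using c0
    by (metis ceiling_mono ceiling_zero of_int_of_nat_eq of_nat_le_iff of_nat_nat zero_le_ceiling)
  have cl: "finite (tleaves d \<epsilon>)" "card (tleaves d \<epsilon>) \<le> (d + ?R) choose ?R" using count_leaves[OF assms] by auto
  then have clr: "real (card (tleaves d \<epsilon>)) \<le> real ((d + ?R) choose ?R)" by simp
  have x1: "1 \<le> 1 / \<epsilon>" using assms by simp
  have d2: "d = 2 \<longrightarrow> real (card (tleaves d \<epsilon>)) \<le> 2 * (1 / \<epsilon> + 1 / 2) * (1 / \<epsilon>)"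
  proof
    assume "d = 2"
    then show "real (card (tleaves d \<epsilon>)) \<le> 2 * (1 / \<epsilon> + 1 / 2) * (1 / \<epsilon>)"
      using final_d2[of ?R "1 / \<epsilon>" "card (tleaves d \<epsilon>)"] hb x1 clr by simp
  qed
  have d3: "3 \<le> d \<longrightarrow> real (card (tleaves d \<epsilon>))
              \<le> real d ^ d / fact d * (1 / \<epsilon> - 1 / 2 * (1 - 3 / real d)) ^ d
            \<and> real d ^ d / fact d * (1 / \<epsilon> - 1 / 2 * (1 - 3 / real d)) ^ d
              \<le> real d ^ d / fact d * (1 / \<epsilon>) ^ d"
    using final_d3[of ?R d "1 / \<epsilon>" "card (tleaves d \<epsilon>)"] hb x1 clr by simp
  show ?thesis using h l hb cl(1) d2 d3 by simp
qed

end
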